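(* Let $\rho>0$ and $n\in\mathbb N$, and put $b_n=(2^n-1)\rho^{-n}$ if $\rho\le1$ and $b_n=2^n-1$ if $\rho\ge1$. Then for every $\varepsilon=(\varepsilon_1,\dots,\varepsilon_n)\in\mathbb C^n$ there exist $s\in\mathbb N$, $\mu_1,\dots,\mu_s\in\mathbb C$ with $|\mu_j|=\rho$, and $\alpha_1,\dots,\alpha_s\ge0$ such that $$\sum_{j=1}^s\alpha_j\le b_n\|\varepsilon\|\qquad\text{and}\qquad\sum_{j=1}^s\alpha_j\mu_j^k=\varepsilon_k\quad(1\le k\le n).$$
   Context: $\|\varepsilon\|=\max_{1\le k\le n}|\varepsilon_k|$. *)

theory Defs
  imports "HOL-Analysis.Analysis"
begin

text \<open>Sup norm of a vector eps in C^n, stored as a function indexed by 1..n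
  (value 0 for n = 0).\<close>
definition supnorm :: "nat \<Rightarrow> (nat \<Rightarrow> complex) \<Rightarrow> real" where
  "supnorm n eps = (if n = 0 then 0 else Max ((\<lambda>k. cmod (eps k)) ` {1..n}))"

definition bconst :: "real \<Rightarrow> nat \<Rightarrow> real" where
  "bconst rho n = (if rho \<le> 1 then (2 ^ n - 1) * rho powi (- int n) else 2 ^ n - 1)"

end

theory Submission imports Defs begin

definition mom :: "nat \<Rightarrow> (complex \<times> real) list \<Rightarrow> complex" where
  "mom k L = (\<Sum>p\<leftarrow>L. complex_of_real (snd p) * fst p ^ k)"

definition good :: "(complex \<times> real) list \<Rightarrow> bool" where
  "good L \<longleftrightarrow> (\<forall>p\<in>set L. cmod (fst p) = 1 \<and> snd p \<ge> 0)"

lemma mom_append[simp]: "mom k (L1 @ L2) = mom k L1 + mom k L2"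
  by (simp add: mom_def)
lemma good_append[simp]: "good (L1 @ L2) \<longleftrightarrow> good L1 \<and> good L2"
  by (auto simp: good_def)

lemma omega_ne1:
  fixes m j :: nat
  assumes "0 < m" "m < j"
  shows "cis (2*pi/j) ^ m \<noteq> 1"
proof
  assume "cis (2*pi/j) ^ m = 1"
  then have "cos (real m * (2*pi/j)) = 1" using cos_n_Re_cis_pow_n[of m "2*pi/j"] by simp
  then obtain x :: int where x: "real m * (2*pi/j) = real_of_int x * 2 * pi"
    using cos_one_2pi_int by blast
  have jp: "real j > 0" using assms by simp
  have "real m = real_of_int x * real j" using x jp by (simp add: field_simps)
  then have "int m = x * int j" by (metis of_int_eq_iff of_int_mult of_int_of_nat_eq)
  then have h: "int m = x * int j" .
  have "x \<le> 0 \<or> x \<ge> 1" by arith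
  then show False
  proof
    assume "x \<le> 0" then have "x * int j \<le> 0" by (simp add: mult_nonpos_nonneg)
    with h assms show False by simp
  next
    assume "x \<ge> 1" then have "x * int j \<ge> 1 * int j" by (intro mult_right_mono) auto
    with h assms show False by simp
  qed
qed

lemma roots:
  assumes "j \<ge> 1"
  obtains L where "good L" "sum_list (map snd L) = cmod c"
    "\<forall>m. 1 \<le> m \<longrightarrow> m < j \<longrightarrow> mom m L = 0" "mom j L = c" "\<forall>m. cmod (mom m L) \<le> cmod c"
proof -
  define w where "w = cis (2*pi/j)"
  define z where "z = cis (Arg c / j)"
  define a where "a = cmod c / j"
  define L where "L = map (\<lambda>i. (z * w ^ i, a)) [0..<j]"
  have a0: "a \<ge> 0" by (simp add: a_def)
  have g: "good L" unfolding good_def L_def using a0 by (auto simp: z_def w_def norm_mult norm_power)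
  have s: "sum_list (map snd L) = cmod c" using assms by (simp add: L_def a_def o_def interv_sum_list_conv_sum_set_nat)
  have momL: "mom m L = of_real a * z ^ m * (\<Sum>i<j. (w ^ m) ^ i)" for m
  proof -
    have "mom m L = (\<Sum>i<j. of_real a * (z * w ^ i) ^ m)"
      by (simp add: mom_def L_def o_def interv_sum_list_conv_sum_set_nat atLeast0LessThan)
    also have "\<dots> = (\<Sum>i<j. of_real a * z ^ m * (w ^ m) ^ i)"
      by (rule sum.cong) (simp_all add: power_mult_distrib mult.assoc flip: power_mult, simp add: mult.commute)
    finally show ?thesis by (simp add: sum_distrib_left)
  qed
  have wj1: "w ^ j = 1"
  proof -
    have "real j * (2*pi/real j) = 2*pi" using assms by simp
    then have "cis (real j * (2*pi/real j)) = 1" by simp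
    then show ?thesis unfolding w_def using Complex.DeMoivre[of "2*pi/real j" j] by metis
  qed
  have wj: "(w ^ m) ^ j = 1" for m
    by (metis wj1 mult.commute power_mult power_one)
  have 1: "mom m L = 0" if "1 \<le> m" "m < j" for m
  proof -
    have "w ^ m \<noteq> 1" using omega_ne1 that by (simp add: w_def)
    then show ?thesis by (simp add: momL geometric_sum wj)
  qed
  from wj1 have "mom j L = of_real a * z ^ j * of_nat j" by (simp add: momL)
  also have "\<dots> = c" using assms
    by (simp add: a_def z_def Complex.DeMoivre) (metis rcis_cmod_Arg rcis_def)
  finally have 2: "mom j L = c" .
  have 3: "cmod (mom m L) \<le> cmod c" for m
  proof -
    have "cmod (\<Sum>i<j. (w ^ m) ^ i) \<le> (\<Sum>i<j. cmod ((w ^ m) ^ i))" by (rule norm_sum)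
    also have "\<dots> = j" by (simp add: w_def norm_power)
    finally have "cmod (mom m L) \<le> a * 1 * j" unfolding momL norm_mult
      using a0 by (simp add: z_def norm_power mult_left_mono)
    then show ?thesis using assms by (simp add: a_def)
  qed
  show ?thesis using that g s 1 2 3 by blast
qed
lemma main_unit:
  fixes n d :: nat and e :: "nat \<Rightarrow> complex" and E :: real
  shows "d \<le> n \<Longrightarrow> (\<forall>k\<in>{1..n}. cmod (e k) \<le> E) \<Longrightarrow> (\<forall>k. 1 \<le> k \<longrightarrow> k < n+1-d \<longrightarrow> e k = 0)
     \<Longrightarrow> 0 \<le> E \<Longrightarrow> \<exists>L. good L \<and> sum_list (map snd L) \<le> (2^d - 1) * E \<and> (\<forall>k\<in>{1..n}. mom k L = e k)"
proof (induction d arbitrary: e E)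
  case 0
  show ?case
    by (rule exI[of _ "[]"]) (use 0 in \<open>auto simp: good_def mom_def\<close>)
next
  case (Suc d)
  define j where "j = n - d"
  have j1: "j \<ge> 1" "j \<le> n" using Suc.prems(1) by (auto simp: j_def)
  obtain L1 where L1: "good L1" "sum_list (map snd L1) = cmod (e j)"
    "\<forall>m. 1 \<le> m \<longrightarrow> m < j \<longrightarrow> mom m L1 = 0" "mom j L1 = e j" "\<forall>m. cmod (mom m L1) \<le> cmod (e j)"
    using roots[OF j1(1)] by blast
  have ej: "cmod (e j) \<le> E" using Suc.prems(2) j1 by auto
  define e' where "e' k = e k - mom k L1" for k
  have b: "\<forall>k\<in>{1..n}. cmod (e' k) \<le> 2 * E"
  proof
    fix k assume k: "k \<in> {1..n}"
    have "cmod (e' k) \<le> cmod (e k) + cmod (mom k L1)" unfolding e'_def by (rule norm_triangle_ineq4)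
    also have "\<dots> \<le> E + E" using Suc.prems(2) k L1(5) ej by (meson add_mono order_trans)
    finally show "cmod (e' k) \<le> 2 * E" by simp
  qed
  have z: "\<forall>k. 1 \<le> k \<longrightarrow> k < n+1-d \<longrightarrow> e' k = 0"
  proof (intro allI impI)
    fix k assume k: "1 \<le> k" "k < n+1-d"
    show "e' k = 0"
    proof (cases "k < j")
      case True
      then have "k < n + 1 - Suc d" using Suc.prems(1) by (simp add: j_def)
      then show ?thesis using Suc.prems(3) L1(3) k True by (simp add: e'_def)
    next
      case False
      then have "k = j" using k Suc.prems(1) by (simp add: j_def)
      then show ?thesis using L1(4) by (simp add: e'_def)
    qed
  qed
  obtain L2 where L2: "good L2" "sum_list (map snd L2) \<le> (2^d - 1) * (2 * E)" "\<forall>k\<in>{1..n}. mom k L2 = e' k"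
    using Suc.IH[of e' "2*E"] Suc.prems b z by auto
  have "sum_list (map snd (L1 @ L2)) \<le> E + (2^d - 1) * (2 * E)"
    using L1(2) L2(2) ej by simp
  also have "\<dots> = (2 ^ Suc d - 1) * E" by (simp add: algebra_simps)
  finally show ?case
    using L1 L2 by (intro exI[of _ "L1 @ L2"]) (auto simp: e'_def)
qed
lemma sum_shift1: "(\<Sum>j=1..s. g j) = (\<Sum>i<s. g (Suc i))"
  by (induct s) auto

lemma sum_list_nth': "sum_list (map f L) = (\<Sum>i<length L. f (L!i))"
  by (simp add: sum_list_sum_nth atLeast0LessThan)

lemma supnorm_ge: "k \<in> {1..n} \<Longrightarrow> cmod (eps k) \<le> supnorm n eps"
  unfolding supnorm_def by (auto intro!: Max_ge)

lemma supnorm_nonneg: "0 \<le> supnorm n eps"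
proof (cases "n = 0")
  case True then show ?thesis by (simp add: supnorm_def)
next
  case False
  then have "1 \<in> {1..n}" by simp
  then show ?thesis using supnorm_ge[of 1 n eps] by (meson norm_ge_zero order_trans)
qed

theorem lemma4p8:
  fixes rho :: real and n :: nat and eps :: "nat \<Rightarrow> complex"
  assumes "rho > 0"
  shows "\<exists>(s::nat) (mu::nat \<Rightarrow> complex) (alpha::nat \<Rightarrow> real).
           (\<forall>j\<in>{1..s}. cmod (mu j) = rho \<and> alpha j \<ge> 0) \<and>
           (\<Sum>j=1..s. alpha j) \<le> bconst rho n * supnorm n eps \<and>
           (\<forall>k\<in>{1..n}. (\<Sum>j=1..s. complex_of_real (alpha j) * mu j ^ k) = eps k)"
proof -
  define S where "S = supnorm n eps"
  define c where "c = (if rho \<le> 1 then inverse (rho ^ n) else 1)"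
  define e where "e k = eps k / of_real (rho ^ k)" for k
  have S0: "S \<ge> 0" by (simp add: S_def supnorm_nonneg)
  have c0: "c \<ge> 0" using assms by (simp add: c_def)
  have bc: "bconst rho n = (2 ^ n - 1) * c"
    by (simp add: bconst_def c_def power_int_minus)
  have eb: "\<forall>k\<in>{1..n}. cmod (e k) \<le> c * S"
  proof
    fix k assume k: "k \<in> {1..n}"
    have rk: "rho ^ k > 0" using assms by simp
    have "cmod (e k) = cmod (eps k) / rho ^ k" using rk assms by (simp add: e_def norm_divide norm_power)
    also have "\<dots> \<le> S / rho ^ k" using supnorm_ge[OF k, of eps] rk
      by (simp add: S_def divide_right_mono)
    also have "\<dots> \<le> c * S"
    proof (cases "rho \<le> 1")
      case True
      have "rho ^ n \<le> rho ^ k" using k True assms by (intro power_decreasing) auto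
      then have "inverse (rho ^ k) \<le> inverse (rho ^ n)" using assms by (intro le_imp_inverse_le) auto
      then show ?thesis using True S0 by (simp add: c_def divide_inverse mult.commute mult_left_mono)
    next
      case False
      then have "1 \<le> rho ^ k" by (intro one_le_power) auto
      then have "S / rho ^ k \<le> S" using S0 by (simp add: divide_le_eq mult_le_cancel_left1)
      then show ?thesis using False by (simp add: c_def)
    qed
    finally show "cmod (e k) \<le> c * S" .
  qed
  obtain L where L: "good L" "sum_list (map snd L) \<le> (2^n - 1) * (c * S)" "\<forall>k\<in>{1..n}. mom k L = e k"
    using main_unit[of n n e "c * S"] eb S0 c0 by auto
  define s where "s = length L"
  define mu where "mu j = of_real rho * fst (L ! (j - 1))" for j
  define alpha where "alpha j = snd (L ! (j - 1))" for j
  have 1: "\<forall>j\<in>{1..s}. cmod (mu j) = rho \<and> alpha j \<ge> 0"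
  proof
    fix j assume j: "j \<in> {1..s}"
    then have "L ! (j - 1) \<in> set L" by (auto simp: s_def)
    then show "cmod (mu j) = rho \<and> alpha j \<ge> 0"
      using L(1) assms by (auto simp: good_def mu_def alpha_def norm_mult)
  qed
  have 2: "(\<Sum>j=1..s. alpha j) \<le> bconst rho n * supnorm n eps"
    using L(2) unfolding sum_shift1 by (simp add: alpha_def s_def sum_list_nth' bc S_def mult.assoc)
  have 3: "\<forall>k\<in>{1..n}. (\<Sum>j=1..s. complex_of_real (alpha j) * mu j ^ k) = eps k"
  proof
    fix k assume k: "k \<in> {1..n}"
    have "(\<Sum>j=1..s. complex_of_real (alpha j) * mu j ^ k) = of_real (rho ^ k) * mom k L"
      unfolding sum_shift1 by (simp add: alpha_def mu_def s_def mom_def sum_list_nth' sum_distrib_left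
          power_mult_distrib algebra_simps)
    also have "\<dots> = eps k" using L(3) k assms by (simp add: e_def)
    finally show "(\<Sum>j=1..s. complex_of_real (alpha j) * mu j ^ k) = eps k" .
  qed
  show ?thesis using 1 2 3 by blast
qed
end
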